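(* Let $A,B\subseteq[n]$ satisfy $A\subseteq B$, or $B\subseteq A$, or $A\cap B=\emptyset$. Then $[\Gamma_A,\Gamma_B]=0$.
   Context: Fix $n\ge1$ and real parameters $\mu_1,\dots,\mu_n>0$; write $[n]=\{1,\dots,n\}$. For $i\in[n]$, $r_i$ is the reflection $(r_if)(x)=f(x_1,\dots,-x_i,\dots,x_n)$ and $T_i=\partial_{x_i}+\frac{\mu_i}{x_i}(1-r_i)$. $\mathcal{C}\ell_n$ is generated by $e_1,\dots,e_n$ with $e_ie_j+e_je_i=-2\delta_{ij}$, $V$ is a fixed left $\mathcal{C}\ell_n$-module, and operators act on $\mathcal{P}(\mathbb{R}^n)\otimes V$ with $x_i,T_i,r_i$ acting on the polynomial factor and $e_i$ on $V$. For $A\subseteq[n]$: $\underline{D}_A=\sum_{i\in A}e_iT_i$, $\underline{x}_A=\sum_{i\in A}e_ix_i$, $\underline{S}_A=\frac12([\underline{x}_A,\underline{D}_A]-1)$, $\Gamma_A=\underline{S}_A\prod_{i\in A}r_i$ (empty sums $0$, empty products $1$). *)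

theory Defs
  imports Main "HOL.Real_Vector_Spaces"
begin

text \<open>Elements of P(R^n) tensor V are represented by their coefficient functions:
  p :: (nat => nat) => 'v, where p alpha is the V-coefficient of the monomial
  x^alpha = prod_j x_j^(alpha j).\<close>

type_synonym 'v pv = "(nat \<Rightarrow> nat) \<Rightarrow> 'v"

definition is_poly :: "nat \<Rightarrow> 'v::real_vector pv \<Rightarrow> bool" where
  "is_poly n p \<longleftrightarrow> finite {\<alpha>. p \<alpha> \<noteq> 0} \<and>
     (\<forall>\<alpha>. p \<alpha> \<noteq> 0 \<longrightarrow> (\<forall>j. j \<notin> {1..n} \<longrightarrow> \<alpha> j = 0))"

definition clifford_module :: "nat \<Rightarrow> (nat \<Rightarrow> 'v::real_vector \<Rightarrow> 'v) \<Rightarrow> bool" where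
  "clifford_module n e \<longleftrightarrow> (\<forall>i\<in>{1..n}. linear (e i)) \<and>
     (\<forall>i\<in>{1..n}. \<forall>j\<in>{1..n}. \<forall>v. e i (e j v) + e j (e i v) = (if i = j then -2 else 0) *\<^sub>R v)"

definition mulx :: "nat \<Rightarrow> 'v::real_vector pv \<Rightarrow> 'v pv" where
  "mulx i p = (\<lambda>\<alpha>. if \<alpha> i = 0 then 0 else p (\<alpha>(i := \<alpha> i - 1)))"

text \<open>division by x_i (exact on multiples of x_i; inverse of mulx there)\<close>
definition divx :: "nat \<Rightarrow> 'v::real_vector pv \<Rightarrow> 'v pv" where
  "divx i p = (\<lambda>\<alpha>. p (\<alpha>(i := Suc (\<alpha> i))))"

text \<open>reflection r_i: (r_i f)(x) = f(x_1,..,-x_i,..,x_n)\<close>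
definition rfl :: "nat \<Rightarrow> 'v::real_vector pv \<Rightarrow> 'v pv" where
  "rfl i p = (\<lambda>\<alpha>. ((-1::real) ^ \<alpha> i) *\<^sub>R p \<alpha>)"

definition dx :: "nat \<Rightarrow> 'v::real_vector pv \<Rightarrow> 'v pv" where
  "dx i p = (\<lambda>\<alpha>. real (Suc (\<alpha> i)) *\<^sub>R p (\<alpha>(i := Suc (\<alpha> i))))"

definition dunkl :: "(nat \<Rightarrow> real) \<Rightarrow> nat \<Rightarrow> 'v::real_vector pv \<Rightarrow> 'v pv" where
  "dunkl \<mu> i p = (\<lambda>\<alpha>. dx i p \<alpha> + \<mu> i *\<^sub>R divx i (\<lambda>\<beta>. p \<beta> - rfl i p \<beta>) \<alpha>)"

definition cliff :: "(nat \<Rightarrow> 'v::real_vector \<Rightarrow> 'v) \<Rightarrow> nat \<Rightarrow> 'v pv \<Rightarrow> 'v pv" where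
  "cliff e i p = (\<lambda>\<alpha>. e i (p \<alpha>))"

definition diracA :: "(nat \<Rightarrow> 'v::real_vector \<Rightarrow> 'v) \<Rightarrow> (nat \<Rightarrow> real) \<Rightarrow> nat set \<Rightarrow> 'v pv \<Rightarrow> 'v pv" where
  "diracA e \<mu> A p = (\<lambda>\<alpha>. \<Sum>i\<in>A. cliff e i (dunkl \<mu> i p) \<alpha>)"

definition vecxA :: "(nat \<Rightarrow> 'v::real_vector \<Rightarrow> 'v) \<Rightarrow> nat set \<Rightarrow> 'v pv \<Rightarrow> 'v pv" where
  "vecxA e A p = (\<lambda>\<alpha>. \<Sum>i\<in>A. cliff e i (mulx i p) \<alpha>)"

definition SA :: "(nat \<Rightarrow> 'v::real_vector \<Rightarrow> 'v) \<Rightarrow> (nat \<Rightarrow> real) \<Rightarrow> nat set \<Rightarrow> 'v pv \<Rightarrow> 'v pv" where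
  "SA e \<mu> A p = (\<lambda>\<alpha>. (1/2::real) *\<^sub>R
      (vecxA e A (diracA e \<mu> A p) \<alpha> - diracA e \<mu> A (vecxA e A p) \<alpha> - p \<alpha>))"

definition rflA :: "nat set \<Rightarrow> 'v::real_vector pv \<Rightarrow> 'v pv" where
  "rflA A p = foldr rfl (sorted_list_of_set A) p"

definition GammaA :: "(nat \<Rightarrow> 'v::real_vector \<Rightarrow> 'v) \<Rightarrow> (nat \<Rightarrow> real) \<Rightarrow> nat set \<Rightarrow> 'v pv \<Rightarrow> 'v pv" where
  "GammaA e \<mu> A p = SA e \<mu> A (rflA A p)"

end

theory Submission
  imports Defs
begin

definition lin :: "('v::real_vector pv \<Rightarrow> 'v pv) \<Rightarrow> bool" where
  "lin F \<longleftrightarrow> (\<forall>p q. F (\<lambda>\<alpha>. p \<alpha> + q \<alpha>) = (\<lambda>\<alpha>. F p \<alpha> + F q \<alpha>)) \<and>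
     (\<forall>c p. F (\<lambda>\<alpha>. c *\<^sub>R p \<alpha>) = (\<lambda>\<alpha>. c *\<^sub>R F p \<alpha>))"

definition comm :: "('a \<Rightarrow> 'a) \<Rightarrow> ('a \<Rightarrow> 'a) \<Rightarrow> bool" where
  "comm F G \<longleftrightarrow> (\<forall>p. F (G p) = G (F p))"

definition acomm :: "('v::real_vector pv \<Rightarrow> 'v pv) \<Rightarrow> ('v pv \<Rightarrow> 'v pv) \<Rightarrow> bool" where
  "acomm F G \<longleftrightarrow> (\<forall>p. F (G p) = (\<lambda>\<alpha>. - G (F p) \<alpha>))"

lemma lin_add: "lin F \<Longrightarrow> F (\<lambda>\<alpha>. p \<alpha> + q \<alpha>) = (\<lambda>\<alpha>. F p \<alpha> + F q \<alpha>)"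
  by (simp add: lin_def)
lemma lin_scale: "lin F \<Longrightarrow> F (\<lambda>\<alpha>. c *\<^sub>R p \<alpha>) = (\<lambda>\<alpha>. c *\<^sub>R F p \<alpha>)"
  by (simp add: lin_def)
lemma lin_neg: "lin F \<Longrightarrow> F (\<lambda>\<alpha>. - p \<alpha>) = (\<lambda>\<alpha>. - F p \<alpha>)"
  using lin_scale[of F "-1" p] by simp
lemma lin_diff: "lin F \<Longrightarrow> F (\<lambda>\<alpha>. p \<alpha> - q \<alpha>) = (\<lambda>\<alpha>. F p \<alpha> - F q \<alpha>)"
  using lin_add[of F p "\<lambda>\<alpha>. - q \<alpha>"] lin_neg[of F q] by simp
lemma lin_zero: "lin F \<Longrightarrow> F (\<lambda>\<alpha>. 0) = (\<lambda>\<alpha>. 0)"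
  using lin_scale[of F 0 "\<lambda>\<alpha>. 0"] by simp
lemma lin_sum: assumes "lin F" shows "F (\<lambda>\<alpha>. \<Sum>k\<in>K. f k \<alpha>) = (\<lambda>\<alpha>. \<Sum>k\<in>K. F (f k) \<alpha>)"
proof (induction K rule: infinite_finite_induct)
  case (infinite K) then show ?case using assms by (simp add: lin_zero)
next
  case empty then show ?case using assms by (simp add: lin_zero)
next
  case (insert x F') then show ?case using assms lin_add[OF assms, of "f x" "\<lambda>\<alpha>. \<Sum>k\<in>F'. f k \<alpha>"] by simp
qed

lemma lin_comp: "lin F \<Longrightarrow> lin G \<Longrightarrow> lin (\<lambda>p. F (G p))"
  by (simp add: lin_def)
lemma lin_sumop: "(\<And>i. i \<in> A \<Longrightarrow> lin (G i)) \<Longrightarrow> lin (\<lambda>p \<alpha>. \<Sum>i\<in>A. G i p \<alpha>)"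
  by (simp add: lin_def sum.distrib scaleR_sum_right)

lemma comm_sumop:
  assumes l: "lin F" and c: "\<And>i. i \<in> A \<Longrightarrow> comm F (G i)"
  shows "comm F (\<lambda>p \<alpha>. \<Sum>i\<in>A. G i p \<alpha>)"
  unfolding comm_def
proof
  fix p
  have "F (\<lambda>\<alpha>. \<Sum>i\<in>A. G i p \<alpha>) = (\<lambda>\<alpha>. \<Sum>i\<in>A. F (G i p) \<alpha>)" by (rule lin_sum[OF l])
  then show "F (\<lambda>\<alpha>. \<Sum>i\<in>A. G i p \<alpha>) = (\<lambda>\<alpha>. \<Sum>i\<in>A. G i (F p) \<alpha>)"
    using c by (simp add: comm_def)
qed

lemma acomm_sumop:
  assumes l: "lin F" and c: "\<And>i. i \<in> A \<Longrightarrow> acomm F (G i)"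
  shows "acomm F (\<lambda>p \<alpha>. \<Sum>i\<in>A. G i p \<alpha>)"
  unfolding acomm_def
proof
  fix p
  have "F (\<lambda>\<alpha>. \<Sum>i\<in>A. G i p \<alpha>) = (\<lambda>\<alpha>. \<Sum>i\<in>A. F (G i p) \<alpha>)" by (rule lin_sum[OF l])
  then show "F (\<lambda>\<alpha>. \<Sum>i\<in>A. G i p \<alpha>) = (\<lambda>\<alpha>. - (\<Sum>i\<in>A. G i (F p) \<alpha>))"
    using c by (simp add: acomm_def sum_negf)
qed

lemma double_sum_anti:
  fixes f :: "nat \<Rightarrow> nat \<Rightarrow> 'a::real_vector"
  assumes "finite A" "\<And>i j. i \<in> A \<Longrightarrow> j \<in> A \<Longrightarrow> i \<noteq> j \<Longrightarrow> f i j + f j i = 0"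
  shows "(\<Sum>i\<in>A. \<Sum>j\<in>A. f i j) = (\<Sum>i\<in>A. f i i)"
proof -
  have inner: "(\<Sum>j\<in>A. f i j + f j i) = 2 *\<^sub>R f i i" if "i \<in> A" for i
  proof -
    have "(\<Sum>j\<in>A. f i j + f j i) = (f i i + f i i) + (\<Sum>j\<in>A-{i}. f i j + f j i)"
      using assms(1) that by (simp add: sum.remove)
    also have "(\<Sum>j\<in>A-{i}. f i j + f j i) = 0"
      using assms(2) that by (intro sum.neutral) auto
    finally show ?thesis by (simp add: scaleR_2)
  qed
  have sw: "(\<Sum>i\<in>A. \<Sum>j\<in>A. f j i) = (\<Sum>i\<in>A. \<Sum>j\<in>A. f i j)"
    by (rule sum.swap)
  have "2 *\<^sub>R (\<Sum>i\<in>A. \<Sum>j\<in>A. f i j) = (\<Sum>i\<in>A. \<Sum>j\<in>A. f i j) + (\<Sum>i\<in>A. \<Sum>j\<in>A. f j i)"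
    by (simp only: sw scaleR_2)
  also have "\<dots> = (\<Sum>i\<in>A. \<Sum>j\<in>A. f i j + f j i)" by (simp add: sum.distrib)
  also have "\<dots> = (\<Sum>i\<in>A. 2 *\<^sub>R f i i)" using inner by simp
  also have "\<dots> = 2 *\<^sub>R (\<Sum>i\<in>A. f i i)" by (simp add: scaleR_sum_right)
  finally show ?thesis by simp
qed

definition cf :: "real \<Rightarrow> nat \<Rightarrow> real" where
  "cf m k = real (Suc k) + (if even k then 2 * m else 0)"

lemma mulx_ap: "mulx i p \<alpha> = (if \<alpha> i = 0 then 0 else p (\<alpha>(i := \<alpha> i - 1)))"
  by (simp add: mulx_def)
lemma rfl_ap: "rfl i p \<alpha> = ((-1::real) ^ \<alpha> i) *\<^sub>R p \<alpha>"
  by (simp add: rfl_def)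
lemma cliff_ap: "cliff e i p \<alpha> = e i (p \<alpha>)"
  by (simp add: cliff_def)
lemma cf_alt: "real (Suc k) + m * (1 - (-1::real) ^ Suc k) = cf m k"
  by (cases "even k") (auto simp: cf_def)

lemma dunkl_ap: "dunkl \<mu> i p \<alpha> = cf (\<mu> i) (\<alpha> i) *\<^sub>R p (\<alpha>(i := Suc (\<alpha> i)))"
proof -
  have "dunkl \<mu> i p \<alpha> = (real (Suc (\<alpha> i)) + \<mu> i * (1 - (-1::real) ^ Suc (\<alpha> i))) *\<^sub>R p (\<alpha>(i := Suc (\<alpha> i)))"
    by (simp add: dunkl_def dx_def divx_def rfl_def algebra_simps)
  then show ?thesis by (simp only: cf_alt)
qed

lemma lin_mulx: "lin (mulx i)"
  by (auto simp: lin_def mulx_ap fun_eq_iff)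
lemma lin_rfl: "lin (rfl i)"
  by (auto simp: lin_def rfl_ap fun_eq_iff algebra_simps)
lemma lin_dunkl: "lin (dunkl \<mu> i)"
  by (auto simp: lin_def dunkl_ap fun_eq_iff algebra_simps)

lemma mulx_mulx: "i \<noteq> j \<Longrightarrow> mulx i (mulx j p) = mulx j (mulx i p)"
  by (auto simp: fun_eq_iff mulx_ap fun_upd_twist)
lemma mulx_dunkl: "i \<noteq> j \<Longrightarrow> mulx i (dunkl \<mu> j p) = dunkl \<mu> j (mulx i p)"
  by (auto simp: fun_eq_iff mulx_ap dunkl_ap fun_upd_twist)
lemma dunkl_dunkl: "i \<noteq> j \<Longrightarrow> dunkl \<mu> i (dunkl \<mu> j p) = dunkl \<mu> j (dunkl \<mu> i p)"
  by (auto simp: fun_eq_iff dunkl_ap fun_upd_twist)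

lemma K1: "dunkl \<mu> j (mulx j (mulx j p)) \<alpha> - mulx j (mulx j (dunkl \<mu> j p)) \<alpha> = 2 *\<^sub>R mulx j p \<alpha>"
proof (cases "\<alpha> j")
  case 0 then show ?thesis by (simp add: mulx_ap dunkl_ap)
next
  case (Suc m)
  show ?thesis
  proof (cases m)
    case 0 then show ?thesis using Suc by (simp add: mulx_ap dunkl_ap cf_def)
  next
    case (Suc k)
    have c: "cf (\<mu> j) (Suc (Suc k)) - cf (\<mu> j) k = 2" by (simp add: cf_def)
    have "dunkl \<mu> j (mulx j (mulx j p)) \<alpha> - mulx j (mulx j (dunkl \<mu> j p)) \<alpha>
       = (cf (\<mu> j) (Suc (Suc k)) - cf (\<mu> j) k) *\<^sub>R p (\<alpha>(j := Suc k))"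
      using Suc \<open>\<alpha> j = Suc m\<close> by (simp add: mulx_ap dunkl_ap scaleR_diff_left)
    then show ?thesis using Suc \<open>\<alpha> j = Suc m\<close> c by (simp add: mulx_ap)
  qed
qed

lemma K2: "mulx j (dunkl \<mu> j (dunkl \<mu> j p)) \<alpha> - dunkl \<mu> j (dunkl \<mu> j (mulx j p)) \<alpha> = - 2 *\<^sub>R dunkl \<mu> j p \<alpha>"
proof (cases "\<alpha> j")
  case 0
  have c: "- (cf (\<mu> j) 0 * cf (\<mu> j) 1) = - 2 * cf (\<mu> j) 0" by (simp add: cf_def)
  have "mulx j (dunkl \<mu> j (dunkl \<mu> j p)) \<alpha> - dunkl \<mu> j (dunkl \<mu> j (mulx j p)) \<alpha>
     = (- (cf (\<mu> j) 0 * cf (\<mu> j) 1)) *\<^sub>R p (\<alpha>(j := 1))"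
    using 0 by (simp add: mulx_ap dunkl_ap)
  then show ?thesis using 0 c by (simp add: dunkl_ap)
next
  case (Suc m)
  have c: "cf (\<mu> j) m * cf (\<mu> j) (Suc m) - cf (\<mu> j) (Suc m) * cf (\<mu> j) (Suc (Suc m)) = - 2 * cf (\<mu> j) (Suc m)"
    by (simp add: cf_def algebra_simps)
  have "mulx j (dunkl \<mu> j (dunkl \<mu> j p)) \<alpha> - dunkl \<mu> j (dunkl \<mu> j (mulx j p)) \<alpha>
     = (cf (\<mu> j) m * cf (\<mu> j) (Suc m) - cf (\<mu> j) (Suc m) * cf (\<mu> j) (Suc (Suc m))) *\<^sub>R p (\<alpha>(j := Suc (Suc m)))"
    using Suc by (simp add: mulx_ap dunkl_ap scaleR_diff_left)
  then show ?thesis using Suc c by (simp add: dunkl_ap)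
qed


lemma foldr_rfl: "foldr rfl xs p = (\<lambda>\<alpha>. ((-1::real) ^ sum_list (map \<alpha> xs)) *\<^sub>R p \<alpha>)"
  by (induction xs) (auto simp: rfl_def fun_eq_iff power_add)

lemma rflA_ap: "finite A \<Longrightarrow> rflA A p \<alpha> = ((-1::real) ^ (\<Sum>i\<in>A. \<alpha> i)) *\<^sub>R p \<alpha>"
  by (simp add: rflA_def foldr_rfl sum_list_distinct_conv_sum_set)

lemma lin_rflA: "finite A \<Longrightarrow> lin (rflA A)"
  by (simp add: lin_def rflA_ap fun_eq_iff algebra_simps)

lemma rflA_rflA: "finite A \<Longrightarrow> finite B \<Longrightarrow> rflA A (rflA B p) = rflA B (rflA A p)"
  by (simp add: fun_eq_iff rflA_ap)

lemma sum_if_out: "i \<notin> B \<Longrightarrow> (\<Sum>ia\<in>B. if ia = i then v else \<alpha> ia) = sum \<alpha> B"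
  by (rule sum.cong) auto
lemma sum_if_in: "finite B \<Longrightarrow> i \<in> B \<Longrightarrow> (\<Sum>ia\<in>B. if ia = i then v else \<alpha> ia) = v + sum \<alpha> (B - {i})"
proof -
  assume B: "finite B" "i \<in> B"
  then have "(\<Sum>ia\<in>B. if ia = i then v else \<alpha> ia) = v + (\<Sum>ia\<in>B-{i}. if ia = i then v else \<alpha> ia)"
    by (simp add: sum.remove)
  also have "(\<Sum>ia\<in>B-{i}. if ia = i then v else \<alpha> ia) = sum \<alpha> (B - {i})"
    by (rule sum.cong) auto
  finally show ?thesis .
qed

lemma rflA_mulx_out: "finite B \<Longrightarrow> i \<notin> B \<Longrightarrow> rflA B (mulx i p) = mulx i (rflA B p)"
  by (simp add: fun_eq_iff rflA_ap mulx_ap sum_if_out)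
lemma rflA_dunkl_out: "finite B \<Longrightarrow> i \<notin> B \<Longrightarrow> rflA B (dunkl \<mu> i p) = dunkl \<mu> i (rflA B p)"
  by (simp add: fun_eq_iff rflA_ap dunkl_ap sum_if_out)

lemma rflA_mulx_in:
  assumes B: "finite B" "i \<in> B"
  shows "rflA B (mulx i p) = (\<lambda>\<alpha>. - mulx i (rflA B p) \<alpha>)"
proof (rule ext)
  fix \<alpha> :: "nat \<Rightarrow> nat"
  show "rflA B (mulx i p) \<alpha> = - mulx i (rflA B p) \<alpha>"
  proof (cases "\<alpha> i")
    case 0 then show ?thesis using B by (simp add: mulx_ap rflA_ap)
  next
    case (Suc m)
    have "sum \<alpha> B = Suc m + sum \<alpha> (B - {i})" using B Suc by (simp add: sum.remove)
    then show ?thesis using B Suc by (simp add: mulx_ap rflA_ap sum_if_in)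
  qed
qed

lemma rflA_dunkl_in:
  assumes B: "finite B" "i \<in> B"
  shows "rflA B (dunkl \<mu> i p) = (\<lambda>\<alpha>. - dunkl \<mu> i (rflA B p) \<alpha>)"
proof (rule ext)
  fix \<alpha> :: "nat \<Rightarrow> nat"
  have "sum \<alpha> B = \<alpha> i + sum \<alpha> (B - {i})" using B by (simp add: sum.remove)
  then show "rflA B (dunkl \<mu> i p) \<alpha> = - dunkl \<mu> i (rflA B p) \<alpha>"
    using B by (simp add: dunkl_ap rflA_ap sum_if_in)
qed

lemmas lin_all = lin_add lin_scale lin_diff lin_neg lin_zero lin_sum

lemma lin_Sop:
  assumes lX: "lin X" and lD: "lin D"
  shows "lin (\<lambda>p \<alpha>. (1/2::real) *\<^sub>R (X (D p) \<alpha> - D (X p) \<alpha> - p \<alpha>))"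
  unfolding lin_def
  by (simp add: lin_add[OF lX] lin_add[OF lD] lin_scale[OF lX] lin_scale[OF lD] fun_eq_iff algebra_simps)

lemma comm_Sop:
  assumes "lin R" "lin X" "lin D" "comm R X" "comm R D"
  shows "comm R (\<lambda>p \<alpha>. (1/2::real) *\<^sub>R (X (D p) \<alpha> - D (X p) \<alpha> - p \<alpha>))"
  using assms(4,5) by (simp add: comm_def lin_all[OF assms(1)])

lemma acomm_Sop:
  assumes "lin R" "lin X" "lin D" "acomm R X" "acomm R D"
  shows "comm R (\<lambda>p \<alpha>. (1/2::real) *\<^sub>R (X (D p) \<alpha> - D (X p) \<alpha> - p \<alpha>))"
  using assms(4,5) by (simp add: comm_def acomm_def lin_all[OF assms(1)] lin_all[OF assms(2)] lin_all[OF assms(3)])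

lemma SA_eq: "SA e \<mu> A = (\<lambda>p \<alpha>. (1/2::real) *\<^sub>R (vecxA e A (diracA e \<mu> A p) \<alpha> - diracA e \<mu> A (vecxA e A p) \<alpha> - p \<alpha>))"
  by (simp add: fun_eq_iff SA_def)
lemma vecxA_eq: "vecxA e A = (\<lambda>p \<alpha>. \<Sum>i\<in>A. cliff e i (mulx i p) \<alpha>)"
  by (simp add: fun_eq_iff vecxA_def)
lemma diracA_eq: "diracA e \<mu> A = (\<lambda>p \<alpha>. \<Sum>i\<in>A. cliff e i (dunkl \<mu> i p) \<alpha>)"
  by (simp add: fun_eq_iff diracA_def)
lemma vecxA_ap: "vecxA e A p \<alpha> = (\<Sum>i\<in>A. e i (mulx i p \<alpha>))"
  by (simp add: vecxA_def cliff_ap)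
lemma diracA_ap: "diracA e \<mu> A p \<alpha> = (\<Sum>i\<in>A. e i (dunkl \<mu> i p \<alpha>))"
  by (simp add: diracA_def cliff_ap)
lemma comm_addop: "lin F \<Longrightarrow> comm F G \<Longrightarrow> comm F H \<Longrightarrow> comm F (\<lambda>p \<alpha>. G p \<alpha> + H p \<alpha>)"
  by (simp add: comm_def lin_all)
lemma GammaA_eq: "GammaA e \<mu> A = (\<lambda>p. SA e \<mu> A (rflA A p))"
  by (simp add: fun_eq_iff GammaA_def)

lemma inner1:
  assumes "finite A" "j \<in> A"
  shows "(\<Sum>i\<in>A. dunkl \<mu> j (mulx i (mulx i p)) \<alpha> - mulx i (mulx i (dunkl \<mu> j p)) \<alpha>) = 2 *\<^sub>R mulx j p \<alpha>"
proof -
  have "(\<Sum>i\<in>A. dunkl \<mu> j (mulx i (mulx i p)) \<alpha> - mulx i (mulx i (dunkl \<mu> j p)) \<alpha>)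
     = (dunkl \<mu> j (mulx j (mulx j p)) \<alpha> - mulx j (mulx j (dunkl \<mu> j p)) \<alpha>) +
       (\<Sum>i\<in>A-{j}. dunkl \<mu> j (mulx i (mulx i p)) \<alpha> - mulx i (mulx i (dunkl \<mu> j p)) \<alpha>)"
    using assms by (simp add: sum.remove)
  also have "(\<Sum>i\<in>A-{j}. dunkl \<mu> j (mulx i (mulx i p)) \<alpha> - mulx i (mulx i (dunkl \<mu> j p)) \<alpha>) = 0"
    by (rule sum.neutral) (auto simp: mulx_dunkl)
  finally show ?thesis by (simp add: K1)
qed

lemma inner2:
  assumes "finite A" "j \<in> A"
  shows "(\<Sum>i\<in>A. mulx j (dunkl \<mu> i (dunkl \<mu> i p)) \<alpha> - dunkl \<mu> i (dunkl \<mu> i (mulx j p)) \<alpha>) = - 2 *\<^sub>R dunkl \<mu> j p \<alpha>"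
proof -
  have "(\<Sum>i\<in>A. mulx j (dunkl \<mu> i (dunkl \<mu> i p)) \<alpha> - dunkl \<mu> i (dunkl \<mu> i (mulx j p)) \<alpha>)
     = (mulx j (dunkl \<mu> j (dunkl \<mu> j p)) \<alpha> - dunkl \<mu> j (dunkl \<mu> j (mulx j p)) \<alpha>) +
       (\<Sum>i\<in>A-{j}. mulx j (dunkl \<mu> i (dunkl \<mu> i p)) \<alpha> - dunkl \<mu> i (dunkl \<mu> i (mulx j p)) \<alpha>)"
    using assms by (simp add: sum.remove)
  also have "(\<Sum>i\<in>A-{j}. mulx j (dunkl \<mu> i (dunkl \<mu> i p)) \<alpha> - dunkl \<mu> i (dunkl \<mu> i (mulx j p)) \<alpha>) = 0"
    by (rule sum.neutral) (auto simp: mulx_dunkl)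
  finally show ?thesis using K2 by simp
qed

context
  fixes n :: nat and e :: "nat \<Rightarrow> 'v::real_vector \<Rightarrow> 'v"
  assumes cm: "clifford_module n e"
begin

lemma e_lin: "i \<in> {1..n} \<Longrightarrow> linear (e i)"
  using cm by (simp add: clifford_module_def)
lemma e_anti: "i \<in> {1..n} \<Longrightarrow> j \<in> {1..n} \<Longrightarrow> i \<noteq> j \<Longrightarrow> e i (e j v) + e j (e i v) = 0"
  using cm by (simp add: clifford_module_def)
lemma e_sq:
  assumes i: "i \<in> {1..n}"
  shows "e i (e i v) = - v"
proof -
  have "\<forall>i\<in>{1..n}. \<forall>j\<in>{1..n}. \<forall>v. e i (e j v) + e j (e i v) = (if i = j then -2 else 0) *\<^sub>R v"
    using cm by (simp add: clifford_module_def)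
  then have h: "e i (e i v) + e i (e i v) = (-2) *\<^sub>R v" using i by auto
  then have "(2::real) *\<^sub>R e i (e i v) = (2::real) *\<^sub>R (- v)" by (simp add: scaleR_2)
  then show ?thesis by (subst (asm) scaleR_cancel_left) simp
qed

lemma e_zero: "i \<in> {1..n} \<Longrightarrow> e i 0 = 0" using e_lin linear_0 by blast
lemma e_add: "i \<in> {1..n} \<Longrightarrow> e i (a + b) = e i a + e i b" using e_lin linear_add by blast
lemma e_scale: "i \<in> {1..n} \<Longrightarrow> e i (c *\<^sub>R a) = c *\<^sub>R e i a" using e_lin linear_scale by blast
lemma e_neg: "i \<in> {1..n} \<Longrightarrow> e i (- a) = - e i a" using e_lin linear_neg by blast
lemma e_diff: "i \<in> {1..n} \<Longrightarrow> e i (a - b) = e i a - e i b" using e_lin linear_diff by blast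
lemma e_sum: "i \<in> {1..n} \<Longrightarrow> e i (\<Sum>k\<in>K. f k) = (\<Sum>k\<in>K. e i (f k))" using e_lin linear_sum by blast

lemma lin_cliff: "i \<in> {1..n} \<Longrightarrow> lin (cliff e i)"
  by (simp add: lin_def cliff_ap fun_eq_iff e_add e_scale)

lemma mulx_cliff: "i \<in> {1..n} \<Longrightarrow> mulx j (cliff e i q) = cliff e i (mulx j q)"
  by (simp add: fun_eq_iff mulx_ap cliff_ap e_zero)
lemma dunkl_cliff: "i \<in> {1..n} \<Longrightarrow> dunkl \<mu> j (cliff e i q) = cliff e i (dunkl \<mu> j q)"
  by (simp add: fun_eq_iff dunkl_ap cliff_ap e_scale)
lemma rflA_cliff: "i \<in> {1..n} \<Longrightarrow> finite B \<Longrightarrow> rflA B (cliff e i q) = cliff e i (rflA B q)"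
  by (simp add: fun_eq_iff rflA_ap cliff_ap e_scale)


lemma acomm_gen:
  assumes ij: "i \<in> {1..n}" "j \<in> {1..n}" "i \<noteq> j"
    and PQ: "\<And>p. P (Q p) = Q (P p)"
    and Pc: "\<And>q. P (cliff e i q) = cliff e i (P q)"
    and Qc: "\<And>q. Q (cliff e j q) = cliff e j (Q q)"
  shows "acomm (\<lambda>p. cliff e j (P p)) (\<lambda>p. cliff e i (Q p))"
  unfolding acomm_def
proof (intro allI ext)
  fix p \<alpha>
  have "e j (e i (Q (P p) \<alpha>)) + e i (e j (Q (P p) \<alpha>)) = 0" using e_anti[OF ij(2,1)] ij(3) by simp
  then show "cliff e j (P (cliff e i (Q p))) \<alpha> = - cliff e i (Q (cliff e j (P p))) \<alpha>"
    by (simp add: Pc Qc PQ cliff_ap eq_neg_iff_add_eq_0)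
qed

lemma lin_xo: "i \<in> {1..n} \<Longrightarrow> lin (\<lambda>p. cliff e i (mulx i p))"
  by (rule lin_comp[OF lin_cliff lin_mulx])
lemma lin_do: "i \<in> {1..n} \<Longrightarrow> lin (\<lambda>p. cliff e i (dunkl \<mu> i p))"
  by (rule lin_comp[OF lin_cliff lin_dunkl])
lemma lin_vecxA: "A \<subseteq> {1..n} \<Longrightarrow> lin (vecxA e A)"
  unfolding vecxA_eq by (intro lin_sumop lin_xo) auto
lemma lin_diracA: "A \<subseteq> {1..n} \<Longrightarrow> lin (diracA e \<mu> A)"
  unfolding diracA_eq by (intro lin_sumop lin_do) auto
lemma lin_SA: "A \<subseteq> {1..n} \<Longrightarrow> lin (SA e \<mu> A)"
  unfolding SA_eq by (intro lin_Sop lin_vecxA lin_diracA)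
lemma finA: "A \<subseteq> {1..n} \<Longrightarrow> finite A"
  using finite_subset by blast
lemma lin_GammaA: "A \<subseteq> {1..n} \<Longrightarrow> lin (GammaA e \<mu> A)"
  unfolding GammaA_eq by (rule lin_comp[OF lin_SA lin_rflA[OF finA]])

lemma acomm_atoms:
  assumes i: "i \<in> {1..n}" and j: "j \<in> {1..n}" and ij: "i \<noteq> j"
  shows "acomm (\<lambda>p. cliff e j (mulx j p)) (\<lambda>p. cliff e i (mulx i p))"
    and "acomm (\<lambda>p. cliff e j (mulx j p)) (\<lambda>p. cliff e i (dunkl \<mu> i p))"
    and "acomm (\<lambda>p. cliff e j (dunkl \<mu> j p)) (\<lambda>p. cliff e i (mulx i p))"
    and "acomm (\<lambda>p. cliff e j (dunkl \<mu> j p)) (\<lambda>p. cliff e i (dunkl \<mu> i p))"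
proof -
  have ji: "j \<noteq> i" using ij by simp
  show "acomm (\<lambda>p. cliff e j (mulx j p)) (\<lambda>p. cliff e i (mulx i p))"
    by (rule acomm_gen[OF i j ij]) (simp_all add: mulx_mulx[OF ji] mulx_cliff[OF i] mulx_cliff[OF j])
  show "acomm (\<lambda>p. cliff e j (mulx j p)) (\<lambda>p. cliff e i (dunkl \<mu> i p))"
    by (rule acomm_gen[OF i j ij]) (simp_all add: mulx_dunkl[OF ji] mulx_cliff[OF i] mulx_cliff[OF j] dunkl_cliff[OF i] dunkl_cliff[OF j])
  show "acomm (\<lambda>p. cliff e j (dunkl \<mu> j p)) (\<lambda>p. cliff e i (mulx i p))"
    by (rule acomm_gen[OF i j ij]) (simp_all add: mulx_dunkl[OF ij] mulx_cliff[OF i] mulx_cliff[OF j] dunkl_cliff[OF i] dunkl_cliff[OF j])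
  show "acomm (\<lambda>p. cliff e j (dunkl \<mu> j p)) (\<lambda>p. cliff e i (dunkl \<mu> i p))"
    by (rule acomm_gen[OF i j ij]) (simp_all add: dunkl_dunkl[OF ji] dunkl_cliff[OF i] dunkl_cliff[OF j])
qed

lemma xo_X_acomm:
  assumes A: "A \<subseteq> {1..n}" and j: "j \<in> {1..n}" "j \<notin> A"
  shows "acomm (\<lambda>p. cliff e j (mulx j p)) (vecxA e A)"
    and "acomm (\<lambda>p. cliff e j (mulx j p)) (diracA e \<mu> A)"
    and "acomm (\<lambda>p. cliff e j (dunkl \<mu> j p)) (vecxA e A)"
    and "acomm (\<lambda>p. cliff e j (dunkl \<mu> j p)) (diracA e \<mu> A)"
proof -
  have iA: "i \<in> {1..n}" "i \<noteq> j" if "i \<in> A" for i using A j that by auto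
  show "acomm (\<lambda>p. cliff e j (mulx j p)) (vecxA e A)"
    unfolding vecxA_eq by (rule acomm_sumop[OF lin_xo[OF j(1)]]) (rule acomm_atoms(1); use iA j in auto)
  show "acomm (\<lambda>p. cliff e j (mulx j p)) (diracA e \<mu> A)"
    unfolding diracA_eq by (rule acomm_sumop[OF lin_xo[OF j(1)]]) (rule acomm_atoms(2); use iA j in auto)
  show "acomm (\<lambda>p. cliff e j (dunkl \<mu> j p)) (vecxA e A)"
    unfolding vecxA_eq by (rule acomm_sumop[OF lin_do[OF j(1)]]) (rule acomm_atoms(3); use iA j in auto)
  show "acomm (\<lambda>p. cliff e j (dunkl \<mu> j p)) (diracA e \<mu> A)"
    unfolding diracA_eq by (rule acomm_sumop[OF lin_do[OF j(1)]]) (rule acomm_atoms(4); use iA j in auto)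
qed

lemma xo_SA_comm:
  assumes A: "A \<subseteq> {1..n}" and j: "j \<in> {1..n}" "j \<notin> A"
  shows "comm (\<lambda>p. cliff e j (mulx j p)) (SA e \<mu> A)"
    and "comm (\<lambda>p. cliff e j (dunkl \<mu> j p)) (SA e \<mu> A)"
  unfolding SA_eq using xo_X_acomm[OF assms]
  by (intro acomm_Sop lin_xo lin_do lin_vecxA lin_diracA A j; simp)+

lemma rfl_xo:
  assumes B: "finite B" and i: "i \<in> {1..n}"
  shows "i \<in> B \<Longrightarrow> acomm (rflA B) (\<lambda>p. cliff e i (mulx i p))"
    and "i \<in> B \<Longrightarrow> acomm (rflA B) (\<lambda>p. cliff e i (dunkl \<mu> i p))"
    and "i \<notin> B \<Longrightarrow> comm (rflA B) (\<lambda>p. cliff e i (mulx i p))"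
    and "i \<notin> B \<Longrightarrow> comm (rflA B) (\<lambda>p. cliff e i (dunkl \<mu> i p))"
  using B i
  by (simp_all add: acomm_def comm_def rflA_cliff rflA_mulx_in rflA_dunkl_in rflA_mulx_out rflA_dunkl_out
      lin_neg[OF lin_cliff])

lemma rfl_SA_comm:
  assumes A: "A \<subseteq> {1..n}" and B: "finite B" and AB: "A \<subseteq> B \<or> A \<inter> B = {}"
  shows "comm (rflA B) (SA e \<mu> A)"
  using AB
proof
  assume "A \<subseteq> B"
  then have iA: "\<And>i. i \<in> A \<Longrightarrow> i \<in> {1..n} \<and> i \<in> B" using A by auto
  show ?thesis unfolding SA_eq using iA
    by (intro acomm_Sop lin_rflA B lin_vecxA lin_diracA A)
      (unfold vecxA_eq diracA_eq, (intro acomm_sumop lin_rflA B rfl_xo; auto)+)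
next
  assume "A \<inter> B = {}"
  then have iA: "\<And>i. i \<in> A \<Longrightarrow> i \<in> {1..n} \<and> i \<notin> B" using A by auto
  show ?thesis unfolding SA_eq using iA
    by (intro comm_Sop lin_rflA B lin_vecxA lin_diracA A)
      (unfold vecxA_eq diracA_eq, (intro comm_sumop lin_rflA B rfl_xo; auto)+)
qed


lemma XX:
  assumes A: "A \<subseteq> {1..n}"
  shows "vecxA e A (vecxA e A q) = (\<lambda>\<alpha>. - (\<Sum>i\<in>A. mulx i (mulx i q) \<alpha>))"
proof (rule ext)
  fix \<alpha>
  have fin: "finite A" using A by (rule finA)
  have inA: "\<And>i. i \<in> A \<Longrightarrow> i \<in> {1..n}" using A by auto
  have 1: "mulx i (vecxA e A q) \<alpha> = (\<Sum>j\<in>A. e j (mulx i (mulx j q) \<alpha>))" for i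
  proof -
    have "mulx i (vecxA e A q) = (\<lambda>\<alpha>. \<Sum>j\<in>A. mulx i (cliff e j (mulx j q)) \<alpha>)"
      unfolding vecxA_eq by (rule lin_sum[OF lin_mulx])
    then show ?thesis by (simp add: mulx_cliff[OF inA] cliff_ap cong: sum.cong)
  qed
  have "vecxA e A (vecxA e A q) \<alpha> = (\<Sum>i\<in>A. e i (mulx i (vecxA e A q) \<alpha>))" by (rule vecxA_ap)
  also have "\<dots> = (\<Sum>i\<in>A. \<Sum>j\<in>A. e i (e j (mulx i (mulx j q) \<alpha>)))"
    by (simp add: 1 e_sum[OF inA] cong: sum.cong)
  also have "\<dots> = (\<Sum>i\<in>A. e i (e i (mulx i (mulx i q) \<alpha>)))"
  proof (rule double_sum_anti[OF fin])
    fix i j assume ij: "i \<in> A" "j \<in> A" "i \<noteq> j"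
    have "mulx j (mulx i q) = mulx i (mulx j q)" using ij(3) by (simp add: mulx_mulx)
    then show "e i (e j (mulx i (mulx j q) \<alpha>)) + e j (e i (mulx j (mulx i q) \<alpha>)) = 0"
      using e_anti[OF inA[OF ij(1)] inA[OF ij(2)] ij(3)] by simp
  qed
  also have "\<dots> = - (\<Sum>i\<in>A. mulx i (mulx i q) \<alpha>)"
    by (simp add: e_sq[OF inA] sum_negf cong: sum.cong)
  finally show "vecxA e A (vecxA e A q) \<alpha> = - (\<Sum>i\<in>A. mulx i (mulx i q) \<alpha>)" .
qed

lemma DD:
  assumes A: "A \<subseteq> {1..n}"
  shows "diracA e \<mu> A (diracA e \<mu> A q) = (\<lambda>\<alpha>. - (\<Sum>i\<in>A. dunkl \<mu> i (dunkl \<mu> i q) \<alpha>))"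
proof (rule ext)
  fix \<alpha>
  have fin: "finite A" using A by (rule finA)
  have inA: "\<And>i. i \<in> A \<Longrightarrow> i \<in> {1..n}" using A by auto
  have 1: "dunkl \<mu> i (diracA e \<mu> A q) \<alpha> = (\<Sum>j\<in>A. e j (dunkl \<mu> i (dunkl \<mu> j q) \<alpha>))" for i
  proof -
    have "dunkl \<mu> i (diracA e \<mu> A q) = (\<lambda>\<alpha>. \<Sum>j\<in>A. dunkl \<mu> i (cliff e j (dunkl \<mu> j q)) \<alpha>)"
      unfolding diracA_eq by (rule lin_sum[OF lin_dunkl])
    then show ?thesis by (simp add: dunkl_cliff[OF inA] cliff_ap cong: sum.cong)
  qed
  have "diracA e \<mu> A (diracA e \<mu> A q) \<alpha> = (\<Sum>i\<in>A. e i (dunkl \<mu> i (diracA e \<mu> A q) \<alpha>))" by (rule diracA_ap)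
  also have "\<dots> = (\<Sum>i\<in>A. \<Sum>j\<in>A. e i (e j (dunkl \<mu> i (dunkl \<mu> j q) \<alpha>)))"
    by (simp add: 1 e_sum[OF inA] cong: sum.cong)
  also have "\<dots> = (\<Sum>i\<in>A. e i (e i (dunkl \<mu> i (dunkl \<mu> i q) \<alpha>)))"
  proof (rule double_sum_anti[OF fin])
    fix i j assume ij: "i \<in> A" "j \<in> A" "i \<noteq> j"
    have "dunkl \<mu> j (dunkl \<mu> i q) = dunkl \<mu> i (dunkl \<mu> j q)" using ij(3) by (simp add: dunkl_dunkl)
    then show "e i (e j (dunkl \<mu> i (dunkl \<mu> j q) \<alpha>)) + e j (e i (dunkl \<mu> j (dunkl \<mu> i q) \<alpha>)) = 0"
      using e_anti[OF inA[OF ij(1)] inA[OF ij(2)] ij(3)] by simp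
  qed
  also have "\<dots> = - (\<Sum>i\<in>A. dunkl \<mu> i (dunkl \<mu> i q) \<alpha>)"
    by (simp add: e_sq[OF inA] sum_negf cong: sum.cong)
  finally show "diracA e \<mu> A (diracA e \<mu> A q) \<alpha> = - (\<Sum>i\<in>A. dunkl \<mu> i (dunkl \<mu> i q) \<alpha>)" .
qed

lemma LQ:
  assumes A: "A \<subseteq> {1..n}"
  shows "diracA e \<mu> A (\<lambda>\<alpha>. \<Sum>i\<in>A. mulx i (mulx i p) \<alpha>) \<alpha>
     = (\<Sum>i\<in>A. mulx i (mulx i (diracA e \<mu> A p)) \<alpha>) + 2 *\<^sub>R vecxA e A p \<alpha>"
proof -
  have fin: "finite A" using A by (rule finA)
  have inA: "\<And>i. i \<in> A \<Longrightarrow> i \<in> {1..n}" using A by auto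
  have L: "diracA e \<mu> A (\<lambda>\<alpha>. \<Sum>i\<in>A. mulx i (mulx i p) \<alpha>) \<alpha>
      = (\<Sum>j\<in>A. e j (\<Sum>i\<in>A. dunkl \<mu> j (mulx i (mulx i p)) \<alpha>))"
    by (simp only: diracA_ap lin_sum[OF lin_dunkl])
  have R0: "mulx i (mulx i (diracA e \<mu> A p)) = (\<lambda>\<alpha>. \<Sum>j\<in>A. mulx i (mulx i (cliff e j (dunkl \<mu> j p))) \<alpha>)" for i
    unfolding diracA_eq by (simp only: lin_sum[OF lin_mulx])
  have "(\<Sum>i\<in>A. mulx i (mulx i (diracA e \<mu> A p)) \<alpha>)
      = (\<Sum>i\<in>A. \<Sum>j\<in>A. e j (mulx i (mulx i (dunkl \<mu> j p)) \<alpha>))"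
    by (simp add: R0 mulx_cliff[OF inA] cliff_ap cong: sum.cong)
  also have "\<dots> = (\<Sum>j\<in>A. \<Sum>i\<in>A. e j (mulx i (mulx i (dunkl \<mu> j p)) \<alpha>))"
    by (rule sum.swap)
  also have "\<dots> = (\<Sum>j\<in>A. e j (\<Sum>i\<in>A. mulx i (mulx i (dunkl \<mu> j p)) \<alpha>))"
    by (simp add: e_sum[OF inA] cong: sum.cong)
  finally have R: "(\<Sum>i\<in>A. mulx i (mulx i (diracA e \<mu> A p)) \<alpha>) = \<dots>" .
  have D: "(\<Sum>j\<in>A. e j (\<Sum>i\<in>A. dunkl \<mu> j (mulx i (mulx i p)) \<alpha> - mulx i (mulx i (dunkl \<mu> j p)) \<alpha>))
     = (\<Sum>j\<in>A. e j (\<Sum>i\<in>A. dunkl \<mu> j (mulx i (mulx i p)) \<alpha>)) - (\<Sum>j\<in>A. e j (\<Sum>i\<in>A. mulx i (mulx i (dunkl \<mu> j p)) \<alpha>))"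
    by (simp add: sum_subtractf e_diff[OF inA] cong: sum.cong)
  have "diracA e \<mu> A (\<lambda>\<alpha>. \<Sum>i\<in>A. mulx i (mulx i p) \<alpha>) \<alpha> - (\<Sum>i\<in>A. mulx i (mulx i (diracA e \<mu> A p)) \<alpha>)
      = (\<Sum>j\<in>A. e j (\<Sum>i\<in>A. dunkl \<mu> j (mulx i (mulx i p)) \<alpha> - mulx i (mulx i (dunkl \<mu> j p)) \<alpha>))"
    unfolding L R D ..
  also have "\<dots> = (\<Sum>j\<in>A. e j (2 *\<^sub>R mulx j p \<alpha>))"
    by (rule sum.cong) (simp_all add: inner1 fin)
  also have "\<dots> = 2 *\<^sub>R vecxA e A p \<alpha>"
    by (simp add: vecxA_ap e_scale[OF inA] scaleR_sum_right cong: sum.cong)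
  finally show ?thesis by (simp add: algebra_simps)
qed

lemma LP:
  assumes A: "A \<subseteq> {1..n}"
  shows "vecxA e A (\<lambda>\<alpha>. \<Sum>i\<in>A. dunkl \<mu> i (dunkl \<mu> i p) \<alpha>) \<alpha>
     = (\<Sum>i\<in>A. dunkl \<mu> i (dunkl \<mu> i (vecxA e A p)) \<alpha>) - 2 *\<^sub>R diracA e \<mu> A p \<alpha>"
proof -
  have fin: "finite A" using A by (rule finA)
  have inA: "\<And>i. i \<in> A \<Longrightarrow> i \<in> {1..n}" using A by auto
  have L: "vecxA e A (\<lambda>\<alpha>. \<Sum>i\<in>A. dunkl \<mu> i (dunkl \<mu> i p) \<alpha>) \<alpha>
      = (\<Sum>j\<in>A. e j (\<Sum>i\<in>A. mulx j (dunkl \<mu> i (dunkl \<mu> i p)) \<alpha>))"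
    by (simp only: vecxA_ap lin_sum[OF lin_mulx])
  have R0: "dunkl \<mu> i (dunkl \<mu> i (vecxA e A p)) = (\<lambda>\<alpha>. \<Sum>j\<in>A. dunkl \<mu> i (dunkl \<mu> i (cliff e j (mulx j p))) \<alpha>)" for i
    unfolding vecxA_eq by (simp only: lin_sum[OF lin_dunkl])
  have "(\<Sum>i\<in>A. dunkl \<mu> i (dunkl \<mu> i (vecxA e A p)) \<alpha>)
      = (\<Sum>i\<in>A. \<Sum>j\<in>A. e j (dunkl \<mu> i (dunkl \<mu> i (mulx j p)) \<alpha>))"
    by (simp add: R0 dunkl_cliff[OF inA] cliff_ap cong: sum.cong)
  also have "\<dots> = (\<Sum>j\<in>A. \<Sum>i\<in>A. e j (dunkl \<mu> i (dunkl \<mu> i (mulx j p)) \<alpha>))"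
    by (rule sum.swap)
  also have "\<dots> = (\<Sum>j\<in>A. e j (\<Sum>i\<in>A. dunkl \<mu> i (dunkl \<mu> i (mulx j p)) \<alpha>))"
    by (simp add: e_sum[OF inA] cong: sum.cong)
  finally have R: "(\<Sum>i\<in>A. dunkl \<mu> i (dunkl \<mu> i (vecxA e A p)) \<alpha>) = \<dots>" .
  have D: "(\<Sum>j\<in>A. e j (\<Sum>i\<in>A. mulx j (dunkl \<mu> i (dunkl \<mu> i p)) \<alpha> - dunkl \<mu> i (dunkl \<mu> i (mulx j p)) \<alpha>))
     = (\<Sum>j\<in>A. e j (\<Sum>i\<in>A. mulx j (dunkl \<mu> i (dunkl \<mu> i p)) \<alpha>)) - (\<Sum>j\<in>A. e j (\<Sum>i\<in>A. dunkl \<mu> i (dunkl \<mu> i (mulx j p)) \<alpha>))"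
    by (simp add: sum_subtractf e_diff[OF inA] cong: sum.cong)
  have "vecxA e A (\<lambda>\<alpha>. \<Sum>i\<in>A. dunkl \<mu> i (dunkl \<mu> i p) \<alpha>) \<alpha> - (\<Sum>i\<in>A. dunkl \<mu> i (dunkl \<mu> i (vecxA e A p)) \<alpha>)
      = (\<Sum>j\<in>A. e j (\<Sum>i\<in>A. mulx j (dunkl \<mu> i (dunkl \<mu> i p)) \<alpha> - dunkl \<mu> i (dunkl \<mu> i (mulx j p)) \<alpha>))"
    unfolding L R D ..
  also have "\<dots> = (\<Sum>j\<in>A. e j (- 2 *\<^sub>R dunkl \<mu> j p \<alpha>))"
    by (rule sum.cong) (simp_all add: inner2 fin)
  also have "\<dots> = - 2 *\<^sub>R diracA e \<mu> A p \<alpha>"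
    by (simp add: diracA_ap e_scale[OF inA] e_neg[OF inA] scaleR_sum_right sum_negf cong: sum.cong)
  finally show ?thesis by (simp add: algebra_simps)
qed

lemma SA_X_acomm:
  assumes A: "A \<subseteq> {1..n}"
  shows "acomm (SA e \<mu> A) (vecxA e A)"
  unfolding acomm_def
proof (intro allI ext)
  fix p \<alpha>
  let ?X = "vecxA e A" and ?D = "diracA e \<mu> A"
  let ?Q = "\<lambda>q \<alpha>. \<Sum>i\<in>A. mulx i (mulx i q) \<alpha>"
  have lX: "lin ?X" and lD: "lin ?D" using A by (simp_all add: lin_vecxA lin_diracA)
  have 1: "SA e \<mu> A (?X p) \<alpha> = (1/2::real) *\<^sub>R (?X (?D (?X p)) \<alpha> - ?D (?X (?X p)) \<alpha> - ?X p \<alpha>)"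
    by (simp add: SA_def)
  have 2: "?D (?X (?X p)) \<alpha> = - ?D (?Q p) \<alpha>"
    by (simp add: XX[OF A] lin_neg[OF lD])
  have 3: "?X (SA e \<mu> A p) \<alpha> = (1/2::real) *\<^sub>R (?X (?X (?D p)) \<alpha> - ?X (?D (?X p)) \<alpha> - ?X p \<alpha>)"
    by (simp add: SA_eq lin_scale[OF lX] lin_diff[OF lX])
  have 4: "?X (?X (?D p)) \<alpha> = - ?Q (?D p) \<alpha>"
    by (simp add: XX[OF A])
  have 5: "?D (?Q p) \<alpha> = ?Q (?D p) \<alpha> + 2 *\<^sub>R ?X p \<alpha>"
    by (rule LQ[OF A])
  show "SA e \<mu> A (?X p) \<alpha> = - ?X (SA e \<mu> A p) \<alpha>"
    unfolding 1 2 3 4 5 by (simp add: algebra_simps; simp flip: scaleR_add_left)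
qed

lemma SA_D_acomm:
  assumes A: "A \<subseteq> {1..n}"
  shows "acomm (SA e \<mu> A) (diracA e \<mu> A)"
  unfolding acomm_def
proof (intro allI ext)
  fix p \<alpha>
  let ?X = "vecxA e A" and ?D = "diracA e \<mu> A"
  let ?P = "\<lambda>q \<alpha>. \<Sum>i\<in>A. dunkl \<mu> i (dunkl \<mu> i q) \<alpha>"
  have lX: "lin ?X" and lD: "lin ?D" using A by (simp_all add: lin_vecxA lin_diracA)
  have 1: "SA e \<mu> A (?D p) \<alpha> = (1/2::real) *\<^sub>R (?X (?D (?D p)) \<alpha> - ?D (?X (?D p)) \<alpha> - ?D p \<alpha>)"
    by (simp add: SA_def)
  have 2: "?X (?D (?D p)) \<alpha> = - ?X (?P p) \<alpha>"
    by (simp add: DD[OF A] lin_neg[OF lX])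
  have 3: "?D (SA e \<mu> A p) \<alpha> = (1/2::real) *\<^sub>R (?D (?X (?D p)) \<alpha> - ?D (?D (?X p)) \<alpha> - ?D p \<alpha>)"
    by (simp add: SA_eq lin_scale[OF lD] lin_diff[OF lD])
  have 4: "?D (?D (?X p)) \<alpha> = - ?P (?X p) \<alpha>"
    by (simp add: DD[OF A])
  have 5: "?X (?P p) \<alpha> = ?P (?X p) \<alpha> - 2 *\<^sub>R ?D p \<alpha>"
    by (rule LP[OF A])
  show "SA e \<mu> A (?D p) \<alpha> = - ?D (SA e \<mu> A p) \<alpha>"
    unfolding 1 2 3 4 5 by (simp add: algebra_simps; simp flip: scaleR_add_left)
qed

lemma Gamma_X_comm:
  assumes A: "A \<subseteq> {1..n}"
  shows "comm (GammaA e \<mu> A) (vecxA e A)" and "comm (GammaA e \<mu> A) (diracA e \<mu> A)"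
proof -
  have fin: "finite A" using A by (rule finA)
  have iA: "\<And>i. i \<in> A \<Longrightarrow> i \<in> {1..n} \<and> i \<in> A" using A by auto
  have rX: "acomm (rflA A) (vecxA e A)" unfolding vecxA_eq using iA
    by (intro acomm_sumop lin_rflA fin rfl_xo) auto
  have rD: "acomm (rflA A) (diracA e \<mu> A)" unfolding diracA_eq using iA
    by (intro acomm_sumop lin_rflA fin rfl_xo) auto
  have lS: "lin (SA e \<mu> A)" using A by (rule lin_SA)
  show "comm (GammaA e \<mu> A) (vecxA e A)"
    using rX SA_X_acomm[OF A] by (simp add: comm_def acomm_def GammaA_def lin_neg[OF lS])
  show "comm (GammaA e \<mu> A) (diracA e \<mu> A)"
    using rD SA_D_acomm[OF A] by (simp add: comm_def acomm_def GammaA_def lin_neg[OF lS])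
qed

lemma Gamma_xo_comm:
  assumes A: "A \<subseteq> {1..n}" and j: "j \<in> {1..n}" "j \<notin> A"
  shows "comm (GammaA e \<mu> A) (\<lambda>p. cliff e j (mulx j p))"
    and "comm (GammaA e \<mu> A) (\<lambda>p. cliff e j (dunkl \<mu> j p))"
proof -
  have fin: "finite A" using A by (rule finA)
  show "comm (GammaA e \<mu> A) (\<lambda>p. cliff e j (mulx j p))"
    using rfl_xo(3)[OF fin j(1) j(2)] xo_SA_comm(1)[OF A j]
    by (simp add: comm_def GammaA_def)
  show "comm (GammaA e \<mu> A) (\<lambda>p. cliff e j (dunkl \<mu> j p))"
    using rfl_xo(4)[OF fin j(1) j(2)] xo_SA_comm(2)[OF A j]
    by (simp add: comm_def GammaA_def)
qed

lemma Gamma_XB_comm: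
  assumes A: "A \<subseteq> {1..n}" and B: "B \<subseteq> {1..n}" and AB: "A \<subseteq> B \<or> A \<inter> B = {}"
  shows "comm (GammaA e \<mu> A) (vecxA e B)" and "comm (GammaA e \<mu> A) (diracA e \<mu> B)"
proof -
  have lG: "lin (GammaA e \<mu> A)" using A by (rule lin_GammaA)
  have finB: "finite B" using B by (rule finA)
  have jB: "\<And>j. j \<in> B - A \<Longrightarrow> j \<in> {1..n} \<and> j \<notin> A" using B by auto
  have cX: "comm (GammaA e \<mu> A) (\<lambda>p \<alpha>. \<Sum>j\<in>B-A. cliff e j (mulx j p) \<alpha>)"
    using jB by (intro comm_sumop lG Gamma_xo_comm A) auto
  have cD: "comm (GammaA e \<mu> A) (\<lambda>p \<alpha>. \<Sum>j\<in>B-A. cliff e j (dunkl \<mu> j p) \<alpha>)"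
    using jB by (intro comm_sumop lG Gamma_xo_comm A) auto
  show "comm (GammaA e \<mu> A) (vecxA e B)"
    using AB
  proof
    assume "A \<subseteq> B"
    then have "vecxA e B = (\<lambda>p \<alpha>. vecxA e A p \<alpha> + (\<Sum>j\<in>B-A. cliff e j (mulx j p) \<alpha>))"
      using finB by (simp add: vecxA_eq fun_eq_iff sum.subset_diff[of A B] add.commute)
    then show ?thesis using cX Gamma_X_comm(1)[OF A] by (simp add: comm_addop lG)
  next
    assume "A \<inter> B = {}"
    then have "B - A = B" by auto
    then show ?thesis using cX by (simp add: vecxA_eq)
  qed
  show "comm (GammaA e \<mu> A) (diracA e \<mu> B)"
    using AB
  proof
    assume "A \<subseteq> B"
    then have "diracA e \<mu> B = (\<lambda>p \<alpha>. diracA e \<mu> A p \<alpha> + (\<Sum>j\<in>B-A. cliff e j (dunkl \<mu> j p) \<alpha>))"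
      using finB by (simp add: diracA_eq fun_eq_iff sum.subset_diff[of A B] add.commute)
    then show ?thesis using cD Gamma_X_comm(2)[OF A] by (simp add: comm_addop lG)
  next
    assume "A \<inter> B = {}"
    then have "B - A = B" by auto
    then show ?thesis using cD by (simp add: diracA_eq)
  qed
qed

lemma Gamma_comm_main:
  assumes A: "A \<subseteq> {1..n}" and B: "B \<subseteq> {1..n}" and AB: "A \<subseteq> B \<or> A \<inter> B = {}"
  shows "GammaA e \<mu> A (GammaA e \<mu> B p) = GammaA e \<mu> B (GammaA e \<mu> A p)"
proof -
  have lG: "lin (GammaA e \<mu> A)" using A by (rule lin_GammaA)
  have finA': "finite A" using A by (rule finA)
  have finB: "finite B" using B by (rule finA)
  have cS: "comm (GammaA e \<mu> A) (SA e \<mu> B)"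
    unfolding SA_eq using Gamma_XB_comm[OF A B AB]
    by (intro comm_Sop lG lin_vecxA lin_diracA B)
  have cR: "comm (rflA B) (SA e \<mu> A)" by (rule rfl_SA_comm[OF A finB AB])
  have cRG: "rflA B (GammaA e \<mu> A q) = GammaA e \<mu> A (rflA B q)" for q
    using cR by (simp add: comm_def GammaA_def rflA_rflA[OF finB finA'])
  show ?thesis
    using cS by (simp add: comm_def GammaA_def[of e \<mu> B] cRG)
qed

end

theorem lemma3:
  fixes n :: nat and \<mu> :: "nat \<Rightarrow> real" and e :: "nat \<Rightarrow> 'v::real_vector \<Rightarrow> 'v"
    and A B :: "nat set" and p :: "'v pv"
  assumes "n \<ge> 1"
    and "\<forall>i\<in>{1..n}. \<mu> i > 0"
    and "clifford_module n e"
    and "A \<subseteq> {1..n}" and "B \<subseteq> {1..n}"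
    and "A \<subseteq> B \<or> B \<subseteq> A \<or> A \<inter> B = {}"
    and "is_poly n p"
  shows "GammaA e \<mu> A (GammaA e \<mu> B p) = GammaA e \<mu> B (GammaA e \<mu> A p)"
proof (cases "A \<subseteq> B \<or> A \<inter> B = {}")
  case True
  show ?thesis by (rule Gamma_comm_main[OF assms(3,4,5) True])
next
  case False
  then have "B \<subseteq> A \<or> B \<inter> A = {}" using assms(6) by blast
  from Gamma_comm_main[OF assms(3,5,4) this] show ?thesis by (rule sym)
qed

end
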